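(* Let $S_2=\mathrm{span}\langle e,f\rangle$ be the two-dimensional Lie triple system with $[e,f,e]=2e$, $[e,f,f]=-2f$, over a field of characteristic zero, and let $U(S_2)$ be its universal enveloping algebra. Then for every $n\ge 0$, $(e^n,f,e)=-n\,e^n$, i.e. $-2(e^n,f,e)=2n\,e^n$.
   Context: A Lie triple system (L.t.s.) is a vector space $T$ with a trilinear product $[x,y,z]$ satisfying $[x,x,y]=0$, $[x,y,z]+[y,z,x]+[z,x,y]=0$, and $[a,b,[x,y,z]]=[[a,b,x],y,z]+[x,[a,b,y],z]+[x,y,[a,b,z]]$; the product on $S_2$ is determined by the given values together with these identities. For a unital nonassociative algebra $A$ with associator $(x,y,z)=(xy)z-x(yz)$, $\mathrm{LN_{alt}}(A)=\{a\in A : (a,x,y)=-(x,a,y)\ \forall x,y\in A\}$ is an L.t.s. with $[a,b,c]=a(bc)-b(ac)-c(ab)+c(ba)$. The universal enveloping algebra $U(T)$ is the unital algebra with an L.t.s. monomorphism $T\to\mathrm{LN_{alt}}(U(T))$ (elements of $T$ identified with their images) such that $ab=ba$ for $a,b\in T$, universal for L.t.s. homomorphisms into $\mathrm{LN_{alt}}(A)$ with this commutation property. For $c\in T$ the subalgebra generated by $c$ is associative, so $c^n$ is well defined ($c^0=1$). *)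

theory Defs
  imports Complex_Main "HOL-Library.Product_Plus"
begin

text \<open>Unital (not necessarily associative) algebras over a field: the whole type 'u is the
algebra, with scalar multiplication sc.  Powers x ^ n use the class power
(x ^ 0 = 1, x ^ Suc n = x * x ^ n), which is the power in the associative
subalgebra generated by x.\<close>

definition unital_algebra :: "('k::field \<Rightarrow> 'u::{ab_group_add,power} \<Rightarrow> 'u) \<Rightarrow> bool" where
  "unital_algebra sc \<longleftrightarrow> vector_space sc
     \<and> (\<forall>a b c::'u. (a + b) * c = a * c + b * c)
     \<and> (\<forall>a b c::'u. a * (b + c) = a * b + a * c)
     \<and> (\<forall>k a b. sc k a * b = sc k (a * b))
     \<and> (\<forall>k a b. a * sc k b = sc k (a * b))
     \<and> (\<forall>a::'u. 1 * a = a \<and> a * 1 = a)"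

definition assoc :: "'u::{minus,times} \<Rightarrow> 'u \<Rightarrow> 'u \<Rightarrow> 'u" where
  "assoc x y z = (x * y) * z - x * (y * z)"

definition LN_alt :: "'u::{uminus,minus,times} set" where
  "LN_alt = {a. \<forall>x y. assoc a x y = - assoc x a y}"

definition ltp :: "'u::{ab_group_add,times} \<Rightarrow> 'u \<Rightarrow> 'u \<Rightarrow> 'u" where
  "ltp a b c = a * (b * c) - b * (a * c) - c * (a * b) + c * (b * a)"

definition alg_hom :: "('k::field \<Rightarrow> 'u::{ab_group_add,power} \<Rightarrow> 'u) \<Rightarrow>
    ('k \<Rightarrow> 'b::{ab_group_add,power} \<Rightarrow> 'b) \<Rightarrow> ('u \<Rightarrow> 'b) \<Rightarrow> bool" where
  "alg_hom sc sc' \<Phi> \<longleftrightarrow> Vector_Spaces.linear sc sc' \<Phi> \<and> (\<forall>x y. \<Phi> (x * y) = \<Phi> x * \<Phi> y) \<and> \<Phi> 1 = 1"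

text \<open>The product determined by [e,f,e] = 2e, [e,f,f] = -2f and the L.t.s. identities is
[x,y,z] = (x1 y2 - x2 y1) (2 z1 e - 2 z2 f).\<close>

definition S2_scale :: "'k::field \<Rightarrow> 'k \<times> 'k \<Rightarrow> 'k \<times> 'k" where
  "S2_scale c x = (c * fst x, c * snd x)"

definition S2_e :: "'k::field \<times> 'k" where "S2_e = (1, 0)"
definition S2_f :: "'k::field \<times> 'k" where "S2_f = (0, 1)"

definition S2_tp :: "'k::field \<times> 'k \<Rightarrow> 'k \<times> 'k \<Rightarrow> 'k \<times> 'k \<Rightarrow> 'k \<times> 'k" where
  "S2_tp x y z = (let d = fst x * snd y - snd x * fst y in (2 * d * fst z, - 2 * d * snd z))"

definition S2_admissible :: "('k::field \<Rightarrow> 'b::{ab_group_add,power} \<Rightarrow> 'b) \<Rightarrow> ('k \<times> 'k \<Rightarrow> 'b) \<Rightarrow> bool" where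
  "S2_admissible sc \<phi> \<longleftrightarrow> Vector_Spaces.linear S2_scale sc \<phi>
     \<and> (\<forall>x. \<phi> x \<in> LN_alt)
     \<and> (\<forall>x y z. \<phi> (S2_tp x y z) = ltp (\<phi> x) (\<phi> y) (\<phi> z))
     \<and> (\<forall>x y. \<phi> x * \<phi> y = \<phi> y * \<phi> x)"

text \<open>(sc, iota) is a universal enveloping algebra of S_2; the universal property is
quantified over all unital algebras carried by the type 'b.\<close>
definition is_UEA_S2 :: "('k::field \<Rightarrow> 'u::{ab_group_add,power} \<Rightarrow> 'u) \<Rightarrow> ('k \<times> 'k \<Rightarrow> 'u)
    \<Rightarrow> 'b::{ab_group_add,power} itself \<Rightarrow> bool" where
  "is_UEA_S2 sc \<iota> (_ :: 'b itself) \<longleftrightarrow> unital_algebra sc \<and> S2_admissible sc \<iota> \<and> inj \<iota>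
     \<and> (\<forall>(sc' :: 'k \<Rightarrow> 'b \<Rightarrow> 'b) \<phi>. unital_algebra sc' \<and> S2_admissible sc' \<phi> \<longrightarrow>
          (\<exists>!\<Phi>. alg_hom sc sc' \<Phi> \<and> (\<forall>x. \<Phi> (\<iota> x) = \<phi> x)))"

end

theory Submission
  imports Defs
begin

locale S2alg =
  fixes sc :: "'k::field_char_0 \<Rightarrow> 'u::{ab_group_add,power} \<Rightarrow> 'u" and e f :: 'u
  assumes VS: "vector_space sc"
  and distL: "\<And>a b c::'u. (a + b) * c = a * c + b * c"
  and distR: "\<And>a b c::'u. a * (b + c) = a * b + a * c"
  and scL: "\<And>k a b. sc k a * b = sc k (a * b)"
  and scR: "\<And>k a b. a * sc k b = sc k (a * b)"
  and one1: "\<And>a::'u. 1 * a = a" and one2: "\<And>a::'u. a * 1 = a"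
  and LNe: "\<And>x y. (e*x)*y + (x*e)*y = e*(x*y) + x*(e*y)"
  and LNf: "\<And>x y. (f*x)*y + (x*f)*y = f*(x*y) + x*(f*y)"
  and comm: "e*f = f*e"
  and ltpe: "e*(e*f) - f*(e*e) = sc 2 e"
begin

sublocale V: vector_space sc by (rule VS)

lemma mz1[simp]: "(0::'u) * a = 0"
proof -
  have "0 * a = (0+0) * a" by simp
  also have "\<dots> = 0*a + 0*a" by (rule distL)
  finally show ?thesis by simp
qed
lemma mz2[simp]: "a * (0::'u) = 0"
proof -
  have "a * 0 = a * (0+0)" by simp
  also have "\<dots> = a*0 + a*0" by (rule distR)
  finally show ?thesis by simp
qed
lemma mneg1[simp]: "(- a) * (b::'u) = - (a * b)"
proof -
  have "a*b + (-a)*b = 0" using distL[of a "-a" b] by simp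
  then show ?thesis by (metis minus_unique)
qed
lemma mneg2[simp]: "a * (- b) = - (a * (b::'u))"
proof -
  have "a*b + a*(-b) = 0" using distR[of a b "-b"] by simp
  then show ?thesis by (metis minus_unique)
qed
lemma mdiff1[simp]: "(a - b) * (c::'u) = a * c - b * c"
  using distL[of a "-b" c] by simp
lemma mdiff2[simp]: "a * (b - c) = a * b - a * (c::'u)"
  using distR[of a b "-c"] by simp

lemmas msimps[simp] = distL distR scL scR one1 one2

lemma half: "x + x = y + y \<Longrightarrow> x = (y::'u)"
proof -
  assume h: "x + x = y + y"
  have "\<And>z. sc (1/2) (z + z) = z"
    by (simp add: V.scale_right_distrib V.scale_left_distrib[symmetric])
  from this[of x] this[of y] h show ?thesis by metis
qed

lemma two: "sc 2 x = x + x"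
  by (metis V.scale_left_distrib V.scale_one one_add_one)

lemma pow_L: "(\<forall>y. e^(Suc n) * y = e * (e^n * y)) \<and> (\<forall>y. e^n * (e * y) = e^(Suc n) * y)"
proof (induction n)
  case 0 then show ?case by simp
next
  case (Suc n)
  have A: "\<And>y. e^(Suc n) * y = e * (e^n * y)" and B: "\<And>y. e^n * (e * y) = e^(Suc n) * y"
    using Suc by auto
  have ee: "e^(Suc n) * e = e^(Suc (Suc n))"
    using A[of e] B[of 1] by simp
  have C: "e^(Suc n) * (e*y) = e * (e^(Suc n) * y)" for y
    using A[of "e*y"] B[of y] by simp
  have D: "e^(Suc (Suc n)) * y = e * (e^(Suc n) * y)" for y
  proof (rule half)
    have "(e*e^(Suc n))*y + (e^(Suc n)*e)*y = e*(e^(Suc n)*y) + e^(Suc n)*(e*y)" by (rule LNe)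
    then show "e ^ Suc (Suc n) * y + e ^ Suc (Suc n) * y = e * (e ^ Suc n * y) + e * (e ^ Suc n * y)"
      using ee C[of y] by simp
  qed
  show ?case using C D by simp
qed

lemma powS: "e^(Suc n) * y = e * (e^n * y)" using pow_L by blast
lemma powS': "e^n * (e * y) = e^(Suc n) * y" using pow_L by blast
lemma powS2: "(e * e^n) * y = e * (e^n * y)" using powS[of n y] by simp
lemma powe: "e^n * e = e^(Suc n)" using powS'[of n 1] by simp

definition D :: "'u \<Rightarrow> 'u" where "D y = e*(f*y) - f*(e*y)"

lemma ee: "(e*e)*y = e*(e*y)"
  by (rule half) (use LNe[of e y] in simp)

lemma efe: "(e*f)*e = e*(e*f) - e"
proof (rule half)
  have l: "(f*e)*e + (e*f)*e = f*(e*e) + e*(f*e)" by (rule LNf)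
  have "f*(e*e) = e*(e*f) - sc 2 e" using ltpe by (simp add: algebra_simps)
  then show "e * f * e + e * f * e = e * (e * f) - e + (e * (e * f) - e)"
    using l comm by (simp add: two algebra_simps)
qed

lemma fee: "f*(e*e) = e*(e*f) - (e + e)"
  using ltpe by (simp add: two algebra_simps)

lemma D_e: "D (e*y) = e * D y + (e*y + e*y)"
proof -
  let ?u = "e*(e*f)"
  have W: "(e*f)*z + (e*f)*z = e*(f*z) + f*(e*z)" for z using LNe[of f z] comm by simp
  have h1: "?u*y + ((e*f)*e)*y = e*((e*f)*y) + (e*f)*(e*y)" using LNe[of "e*f" y] by simp
  have h2: "(f*(e*e))*y + ((e*e)*f)*y = f*((e*e)*y) + (e*e)*(f*y)" using LNf[of "e*e" y] by simp
  have h1a: "?u*y + ?u*y - e*y = e*((e*f)*y) + (e*f)*(e*y)" using h1 efe by (simp add: algebra_simps)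
  have h2a: "?u*y + ?u*y - (e*y + e*y) = f*(e*(e*y)) + e*(e*(f*y))" using h2 fee ee[of f] ee[of y] ee[of "f*y"]
    by (simp add: algebra_simps)
  have h3: "e*y = e*((e*f)*y) + (e*f)*(e*y) - f*(e*(e*y)) - e*(e*(f*y))" using h1a h2a by (simp add: algebra_simps)
  have h4: "e*y + e*y = e*((e*f)*y + (e*f)*y) + ((e*f)*(e*y) + (e*f)*(e*y)) - (f*(e*(e*y)) + f*(e*(e*y))) - (e*(e*(f*y)) + e*(e*(f*y)))"
    using arg_cong2[OF h3 h3, of "(+)"] by (simp add: algebra_simps)
  show ?thesis unfolding D_def using h4 W[of y] W[of "e*y"] by (simp add: algebra_simps)
qed


lemma sA: "sc a x + sc b x = sc (a+b) x" by (simp add: V.scale_left_distrib)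
lemma sD: "sc a x - sc b x = sc (a-b) x" by (simp add: V.scale_left_diff_distrib)

lemma D_add: "D (x + y) = D x + D y" unfolding D_def by (simp add: algebra_simps)
lemma D_diff: "D (x - y) = D x - D y" unfolding D_def by (simp add: algebra_simps)
lemma D_sc: "D (sc k x) = sc k (D x)" unfolding D_def by (simp add: algebra_simps)
lemma D_one: "D 1 = 0" unfolding D_def using comm by simp

lemma K: "e^(Suc n)*(f*y) - f*(e^(Suc n)*y) = sc (of_nat (Suc n)) (D (e^n*y)) - sc (of_nat (Suc n) * of_nat n) (e^n*y)"
proof (induction n arbitrary: y)
  case 0 then show ?case unfolding D_def by simp
next
  case (Suc n)
  define z where "z = e^(Suc n)*y"
  define c :: 'k where "c = of_nat n"
  have ez: "e*(e^n*y) = z" unfolding z_def by (simp add: powS2)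
  have "e^(Suc (Suc n))*(f*y) - f*(e^(Suc (Suc n))*y) = e*(e^(Suc n)*(f*y) - f*z) + D z"
    unfolding z_def D_def powS[of "Suc n"] by (simp add: algebra_simps del: power_Suc)
  also have "\<dots> = sc (c+1) (e * D (e^n*y)) - sc ((c+1)*c) z + D z"
    using arg_cong[OF Suc.IH[of y], of "\<lambda>t. e * t"] ez unfolding z_def c_def by (simp add: algebra_simps del: power_Suc)
  also have "\<dots> = sc (c+1) (D z - sc 2 z) - sc ((c+1)*c) z + D z"
    using D_e[of "e^n*y"] ez by (simp add: two)
  also have "\<dots> = sc (c+1) (D z) + sc 1 (D z) - (sc ((c+1)*2) z + sc ((c+1)*c) z)"
    by (simp add: algebra_simps)
  also have "\<dots> = sc (c+2) (D z) - sc ((c+2)*(c+1)) z"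
    unfolding sA by (simp add: algebra_simps)
  finally show ?case unfolding z_def c_def by (simp add: algebra_simps)
qed


lemma De: "D (e^n) = sc (2 * of_nat n) (e^n)"
proof (induction n)
  case 0 then show ?case using D_one by simp
next
  case (Suc n)
  have "D (e^Suc n) = D (e * e^n)" by simp
  also have "\<dots> = e * D (e^n) + sc 2 (e * e^n)" using D_e[of "e^n"] by (simp add: two)
  also have "\<dots> = sc (2 * of_nat n) (e*e^n) + sc 2 (e * e^n)" using Suc by simp
  also have "\<dots> = sc (2 * of_nat (Suc n)) (e^Suc n)" unfolding sA by (simp add: algebra_simps)
  finally show ?case .
qed

lemma K2: "e^n*(f*(e*y)) = f*(e^(Suc n)*y) + sc (of_nat n) (D (e^n*y)) - sc (of_nat n*(of_nat n - 1)) (e^n*y)"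
proof (cases n)
  case 0 then show ?thesis by simp
next
  case (Suc m)
  have "e^(Suc m)*(f*(e*y)) - f*(e^(Suc m)*(e*y)) = sc (of_nat (Suc m)) (D (e^m*(e*y))) - sc (of_nat (Suc m) * of_nat m) (e^m*(e*y))"
    by (rule K)
  then show ?thesis using Suc by (simp add: powS' algebra_simps del: power_Suc)
qed

lemma Em1: "sc (of_nat n * k) (e * (e^(n-1)*y)) = sc (of_nat n * k) (e^n*y)"
  by (cases n) (simp_all add: powS2)
lemma Em2: "sc (of_nat n * k) (e^(n-1)*(e*y)) = sc (of_nat n * k) (e^n*y)"
  by (cases n) (simp_all add: powS')

definition G :: "nat \<Rightarrow> bool" where
  "G n \<longleftrightarrow> (\<forall>y. sc 2 ((e^n*f)*y) = e^n*(f*y) + f*(e^n*y) + sc (of_nat n*(of_nat n - 1)) (e^(n-1)*y))"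

lemma G_assoc: "G n \<Longrightarrow> assoc (e^n) f e = - sc (of_nat n) (e^n)"
proof (cases n)
  case 0 then show ?thesis by (simp add: assoc_def)
next
  case (Suc m)
  assume g: "G n"
  define E where "E = e^Suc m"
  have h1: "sc 2 ((E*f)*e) = E*(f*e) + f*(e*E) + sc (of_nat (Suc m) * of_nat m) E"
    using g Suc unfolding G_def E_def by (simp add: powe del: power_Suc) simp
  have "E*(f*e) - f*(E*e) = sc (of_nat (Suc m)) (D (e^m*e)) - sc (of_nat (Suc m) * of_nat m) (e^m*e)"
    unfolding E_def by (rule K)
  then have h2: "E*(f*e) - f*(e*E) = sc (of_nat (Suc m) * (2 * of_nat (Suc m))) E - sc (of_nat (Suc m) * of_nat m) E"
    unfolding E_def by (simp add: powe De del: power_Suc of_nat_Suc) (simp del: of_nat_Suc)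
  define a :: 'k where "a = of_nat (Suc m) * (2 * of_nat (Suc m))"
  define b :: 'k where "b = of_nat (Suc m) * of_nat m"
  have h2': "E*(f*e) - f*(e*E) = sc (a - b) E" using h2 unfolding a_def[symmetric] b_def[symmetric] by (simp add: sD)
  have "sc 2 (assoc E f e) = sc 2 ((E*f)*e) - sc 2 (E*(f*e))" unfolding assoc_def by (simp add: V.scale_right_diff_distrib)
  also have "\<dots> = sc b E - (E*(f*e) - f*(e*E))" using h1 two[of "E*(f*e)"] unfolding b_def[symmetric] by (simp add: algebra_simps)
  also have "\<dots> = sc b E - sc (a-b) E" using h2' by simp
  also have "\<dots> = sc (2*b-a) E" by (simp add: sD)
  also have "\<dots> = sc 2 (- sc (of_nat (Suc m)) E)" unfolding a_def b_def by (simp add: algebra_simps)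
  finally have "sc 2 (assoc E f e) = sc 2 (- sc (of_nat (Suc m)) E)" .
  then have "assoc E f e = - sc (of_nat (Suc m)) E" unfolding V.scale_cancel_left by simp
  then show ?thesis using Suc unfolding E_def by simp
qed


lemma G_step:
  assumes g: "G n" shows "G (Suc n)"
  unfolding G_def
proof
  fix y
  define c :: 'k where "c = of_nat n"
  define w where "w = e^n*y"
  define X0 where "X0 = f*(e^(Suc n)*y)"
  define X1 where "X1 = e^(Suc n)*(f*y)"
  define Dw where "Dw = D w"
  define Gy where "Gy = (e^(Suc n)*f)*y"
  define gg where "gg = e^n*f"
  have ga: "assoc (e^n) f e = - sc c (e^n)" using G_assoc[OF g] c_def by simp
  have eg: "e*gg = e^(Suc n)*f" unfolding gg_def by (simp add: powS2)
  have ge: "gg*e = e^(Suc n)*f - sc c (e^n)"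
  proof -
    have "e^n*(f*e) = e^(Suc n)*f" using powS'[of n f] comm by simp
    then show ?thesis using ga unfolding assoc_def gg_def by (simp add: algebra_simps del: power_Suc)
  qed
  have L: "(e*gg)*y + (gg*e)*y = e*(gg*y) + gg*(e*y)" by (rule LNe)
  have h: "Gy + Gy - sc c w = e*(gg*y) + gg*(e*y)"
    using L unfolding eg ge Gy_def w_def by (simp add: algebra_simps del: power_Suc)
  have g1: "sc 2 (gg*y) = e^n*(f*y) + f*w + sc (c*(c-1)) (e^(n-1)*y)"
    using g unfolding G_def c_def w_def gg_def by blast
  have g2: "sc 2 (gg*(e*y)) = e^n*(f*(e*y)) + f*(e^n*(e*y)) + sc (c*(c-1)) (e^(n-1)*(e*y))"
    using g unfolding G_def c_def w_def gg_def by blast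
  have a1: "e*(e^n*(f*y)) = X1" unfolding X1_def by (simp add: powS2)
  have a2: "e*(f*w) = Dw + X0" unfolding Dw_def X0_def D_def w_def by (simp add: powS2)
  have a3: "e*(sc (c*(c-1)) (e^(n-1)*y)) = sc (c*(c-1)) w" unfolding scR c_def w_def by (rule Em1)
  have a4: "e^n*(f*(e*y)) = X0 + sc c Dw - sc (c*(c-1)) w" unfolding X0_def c_def Dw_def w_def by (rule K2)
  have a5: "f*(e^n*(e*y)) = X0" unfolding X0_def by (simp add: powS' del: power_Suc)
  have a6: "sc (c*(c-1)) (e^(n-1)*(e*y)) = sc (c*(c-1)) w" unfolding c_def w_def by (rule Em2)
  have k: "X1 - X0 = sc (c+1) Dw - sc ((c+1)*c) w"
    using K[of n y] unfolding X1_def X0_def c_def Dw_def w_def by (simp add: add.commute del: power_Suc)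
  have main: "sc 2 (Gy + Gy - sc c w) = X1 + (Dw + X0) + sc (c*(c-1)) w + ((X0 + sc c Dw - sc (c*(c-1)) w) + X0 + sc (c*(c-1)) w)"
  proof -
    have "sc 2 (Gy + Gy - sc c w) = e*(sc 2 (gg*y)) + sc 2 (gg*(e*y))"
      unfolding h by (simp add: V.scale_right_distrib)
    also have "\<dots> = X1 + (Dw + X0) + sc (c*(c-1)) w + ((X0 + sc c Dw - sc (c*(c-1)) w) + X0 + sc (c*(c-1)) w)"
      unfolding g1 g2 distR a1 a2 a3 a4 a5 a6 by simp
    finally show ?thesis .
  qed
  define phi where "phi = (\<lambda>a b c d. sc a Gy + sc b X0 + sc c Dw + sc d w)"
  have p_add: "phi a b c d + phi a' b' c' d' = phi (a+a') (b+b') (c+c') (d+d')" for a b c d a' b' c' d'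
    unfolding phi_def by (simp add: algebra_simps)
  have p_diff: "phi a b c d - phi a' b' c' d' = phi (a-a') (b-b') (c-c') (d-d')" for a b c d a' b' c' d'
    unfolding phi_def by (simp add: algebra_simps)
  have p_sc: "sc k (phi a b c d) = phi (k*a) (k*b) (k*c) (k*d)" for k a b c d
    unfolding phi_def by (simp add: algebra_simps)
  have p_Gy: "Gy = phi 1 0 0 0" and p_X0: "X0 = phi 0 1 0 0" and p_Dw: "Dw = phi 0 0 1 0" and p_w: "w = phi 0 0 0 1"
    unfolding phi_def by simp_all
  have p_eq: "phi a b c d = phi a' b' c' d'" if "a = a'" "b = b'" "c = c'" "d = d'" for a b c d a' b' c' d'
    using that by simp
  have kX: "X1 = phi 0 1 (c+1) (-(c+1)*c)"
  proof -
    have "X1 = X0 + (sc (c+1) Dw - sc ((c+1)*c) w)" using k by (simp add: algebra_simps)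
    also have "\<dots> = phi 0 1 (c+1) (-(c+1)*c)"
      unfolding p_sc p_X0 p_Dw p_w p_add p_diff by (rule p_eq) (simp_all add: algebra_simps)
    finally show ?thesis .
  qed
  have m2: "phi 4 0 0 (-2*c) = phi 0 4 (2*c+2) (c*(c-1) - (c+1)*c)"
  proof -
    have "phi 4 0 0 (-2*c) = sc 2 (Gy + Gy - sc c w)"
      unfolding p_sc p_Gy p_w p_add p_diff by (rule p_eq) simp_all
    also have "\<dots> = phi 0 4 (2*c+2) (c*(c-1) - (c+1)*c)"
      unfolding main kX unfolding p_sc p_X0 p_Dw p_w p_add p_diff by (rule p_eq) (simp_all add: algebra_simps)
    finally show ?thesis .
  qed
  have tgt: "sc 2 Gy = X1 + X0 + sc ((c+1)*c) w"
  proof -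
    have "sc 2 Gy - (X1 + X0 + sc ((c+1)*c) w) = sc (1/2) (phi 4 0 0 (-2*c) - phi 0 4 (2*c+2) (c*(c-1) - (c+1)*c))"
      unfolding kX unfolding p_sc p_X0 p_Gy p_w p_add p_diff by (rule p_eq) (simp_all add: algebra_simps)
    then show ?thesis unfolding m2 by simp
  qed
  show "sc 2 ((e^(Suc n)*f)*y) = e^(Suc n)*(f*y) + f*(e^(Suc n)*y) + sc (of_nat (Suc n)*(of_nat (Suc n) - 1)) (e^(Suc n - 1)*y)"
    using tgt unfolding Gy_def X1_def X0_def w_def c_def by (simp add: algebra_simps del: power_Suc)
qed

lemma G_all: "G n"
proof (induction n)
  case 0 show ?case unfolding G_def by (simp add: two)
next
  case (Suc n) then show ?case by (rule G_step)
qed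

lemma final: "assoc (e^n) f e = - sc (of_nat n) (e^n)"
  using G_assoc G_all by blast

end

theorem mainTheorem4:
  fixes sc :: "'k::field_char_0 \<Rightarrow> 'u::{ab_group_add,power} \<Rightarrow> 'u"
    and \<iota> :: "'k \<times> 'k \<Rightarrow> 'u"
  assumes "is_UEA_S2 sc \<iota> TYPE('b::{ab_group_add,power})"
  shows "\<forall>n::nat. assoc (\<iota> S2_e ^ n) (\<iota> S2_f) (\<iota> S2_e) = - sc (of_nat n) (\<iota> S2_e ^ n)"
proof -
  have ua: "unital_algebra sc" and ad: "S2_admissible sc \<iota>"
    using assms unfolding is_UEA_S2_def by auto
  have lin: "Vector_Spaces.linear S2_scale sc \<iota>" and LN: "\<And>x. \<iota> x \<in> LN_alt"
    and tp: "\<And>x y z. \<iota> (S2_tp x y z) = ltp (\<iota> x) (\<iota> y) (\<iota> z)"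
    and cm: "\<And>x y. \<iota> x * \<iota> y = \<iota> y * \<iota> x"
    using ad unfolding S2_admissible_def by auto
  interpret l: Vector_Spaces.linear S2_scale sc \<iota> using lin by (simp add: Vector_Spaces.linear_def)
  have LN': "(a*x)*y + (x*a)*y = a*(x*y) + x*(a*y)" if "a \<in> LN_alt" for a x y :: 'u
  proof -
    have "assoc a x y = - assoc x a y" using that unfolding LN_alt_def by blast
    then show ?thesis unfolding assoc_def by (simp add: algebra_simps)
  qed
  define e where "e = \<iota> S2_e"
  define f where "f = \<iota> S2_f"
  have t: "S2_tp S2_e S2_f S2_e = S2_scale (2::'k) S2_e"
    unfolding S2_tp_def S2_e_def S2_f_def S2_scale_def by simp
  have "ltp e f e = sc 2 e"
    unfolding e_def f_def using tp[of S2_e S2_f S2_e] unfolding t l.scale by simp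
  then have lt: "e*(e*f) - f*(e*e) = sc 2 e"
    unfolding ltp_def using cm[of S2_e S2_f] unfolding e_def f_def by (simp add: algebra_simps)
  have "S2alg sc e f"
    unfolding S2alg_def using ua LN'[OF LN] cm lt unfolding unital_algebra_def e_def f_def by auto
  then interpret S: S2alg sc e f .
  show ?thesis using S.final unfolding e_def f_def by blast
qed

end
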